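(* Let $T$ be a tree on $n$ vertices with distance matrix $D$ and degree vector $d$. Then $d^\top D d = 4\mathbf{1}^\top D\mathbf{1} - 2(n-1)(2n-1)$.
   Context: $\mathbf{1}$ denotes the all-ones vector of length $n$; the distance matrix $D$ has $(a,b)$ entry equal to the graph distance between vertices $a$ and $b$ of $T$; $d$ is the vector whose $a$-th entry is the degree of vertex $a$. *)

theory Defs
  imports Main
begin

definition simple_graph :: "'a set \<Rightarrow> ('a \<Rightarrow> 'a \<Rightarrow> bool) \<Rightarrow> bool" where
  "simple_graph V E \<longleftrightarrow> finite V \<and>
     (\<forall>u v. E u v \<longrightarrow> u \<in> V \<and> v \<in> V) \<and>
     (\<forall>u v. E u v \<longrightarrow> E v u) \<and> (\<forall>v. \<not> E v v)"

definition walk :: "'a set \<Rightarrow> ('a \<Rightarrow> 'a \<Rightarrow> bool) \<Rightarrow> 'a list \<Rightarrow> bool" where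
  "walk V E ps \<longleftrightarrow> ps \<noteq> [] \<and> set ps \<subseteq> V \<and>
     (\<forall>i. Suc i < length ps \<longrightarrow> E (ps ! i) (ps ! Suc i))"

definition connected_graph :: "'a set \<Rightarrow> ('a \<Rightarrow> 'a \<Rightarrow> bool) \<Rightarrow> bool" where
  "connected_graph V E \<longleftrightarrow>
     (\<forall>u\<in>V. \<forall>v\<in>V. \<exists>ps. walk V E ps \<and> hd ps = u \<and> last ps = v)"

definition has_cycle :: "'a set \<Rightarrow> ('a \<Rightarrow> 'a \<Rightarrow> bool) \<Rightarrow> bool" where
  "has_cycle V E \<longleftrightarrow> (\<exists>ps. walk V E ps \<and> distinct ps \<and> length ps \<ge> 3 \<and> E (last ps) (hd ps))"

definition is_tree :: "'a set \<Rightarrow> ('a \<Rightarrow> 'a \<Rightarrow> bool) \<Rightarrow> bool" where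
  "is_tree V E \<longleftrightarrow> simple_graph V E \<and> V \<noteq> {} \<and> connected_graph V E \<and> \<not> has_cycle V E"

definition gdist :: "'a set \<Rightarrow> ('a \<Rightarrow> 'a \<Rightarrow> bool) \<Rightarrow> 'a \<Rightarrow> 'a \<Rightarrow> nat" where
  "gdist V E u v = (LEAST k. \<exists>ps. walk V E ps \<and> hd ps = u \<and> last ps = v \<and> length ps = Suc k)"

definition degree :: "'a set \<Rightarrow> ('a \<Rightarrow> 'a \<Rightarrow> bool) \<Rightarrow> 'a \<Rightarrow> nat" where
  "degree V E v = card {u\<in>V. E v u}"

end

theory Submission
  imports Defs
begin

lemma walk_append:
  assumes "walk V E xs" "walk V E ys" "E (last xs) (hd ys)"
  shows "walk V E (xs @ ys)"
proof -
  have ne: "xs \<noteq> []" "ys \<noteq> []" using assms by (auto simp: walk_def)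
  have "\<forall>i. Suc i < length (xs@ys) \<longrightarrow> E ((xs@ys)!i) ((xs@ys)!Suc i)"
  proof (intro allI impI)
    fix i assume i: "Suc i < length (xs@ys)"
    consider "Suc i < length xs" | "Suc i = length xs" | "Suc i > length xs" by linarith
    then show "E ((xs@ys)!i) ((xs@ys)!Suc i)"
    proof cases
      case 1 then show ?thesis using assms(1) by (simp add: walk_def nth_append)
    next
      case 2
      have "i = length xs - 1" using 2 by simp
      then have "(xs@ys)!i = last xs" using 2 ne by (simp add: nth_append last_conv_nth)
      moreover have "(xs@ys)!Suc i = hd ys" using 2 ne by (simp add: nth_append hd_conv_nth)
      ultimately show ?thesis using assms(3) by simp
    next
      case 3
      have e1: "(xs@ys)!i = ys!(i - length xs)" using 3 by (simp add: nth_append)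
      have e2: "(xs@ys)!Suc i = ys!Suc (i - length xs)" using 3 by (simp add: nth_append Suc_diff_le)
      have "Suc (i - length xs) < length ys" using 3 i by simp
      then show ?thesis using assms(2) e1 e2 by (simp add: walk_def)
    qed
  qed
  then show ?thesis using assms ne by (auto simp: walk_def)
qed

lemma walk_rev:
  assumes "walk V E xs" "\<And>u v. E u v \<Longrightarrow> E v u"
  shows "walk V E (rev xs)"
proof -
  have "\<forall>i. Suc i < length (rev xs) \<longrightarrow> E (rev xs!i) (rev xs!Suc i)"
  proof (intro allI impI)
    fix i assume i: "Suc i < length (rev xs)"
    have "E (xs ! (length xs - Suc (Suc i))) (xs ! Suc (length xs - Suc (Suc i)))"
      using assms(1) i by (simp add: walk_def)
    moreover have "Suc (length xs - Suc (Suc i)) = length xs - Suc i" using i by simp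
    ultimately show "E (rev xs!i) (rev xs!Suc i)" using i assms(2) by (simp add: rev_nth)
  qed
  then show ?thesis using assms by (auto simp: walk_def)
qed

lemma walk_drop:
  assumes "walk V E xs" "k < length xs"
  shows "walk V E (drop k xs)"
  using assms unfolding walk_def by (auto dest: in_set_dropD)

lemma walk_take:
  assumes "walk V E xs" "0 < k"
  shows "walk V E (take k xs)"
  using assms unfolding walk_def by (auto dest: in_set_takeD)

lemma walk_join:
  assumes "walk V E xs" "walk V E ys" "last xs = hd ys"
  shows "walk V E (xs @ tl ys)"
proof (cases "tl ys = []")
  case True then show ?thesis using assms by simp
next
  case False
  have ne: "ys \<noteq> []" using assms by (auto simp: walk_def)
  have "walk V E (drop 1 ys)" using walk_drop[OF assms(2)] False ne
    by (metis One_nat_def Suc_lessI drop0 drop_Suc length_greater_0_conv length_tl less_numeral_extra(3) zero_less_diff)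
  moreover have "E (last xs) (hd (tl ys))"
  proof -
    have "1 < length ys" using False ne by (cases ys) auto
    then have "E (ys!0) (ys!1)" using assms(2) by (simp add: walk_def)
    then show ?thesis using assms(3) ne False by (cases ys) (auto simp: hd_conv_nth)
  qed
  ultimately show ?thesis using walk_append[OF assms(1)] by (simp add: drop_Suc)
qed

lemma join_last:
  assumes "xs \<noteq> []" "ys \<noteq> []" "last xs = hd ys"
  shows "last (xs @ tl ys) = last ys"
  using assms by (cases ys) auto

lemma in_set_drop_nth:
  assumes "v \<in> set (drop m P)"
  shows "\<exists>i. m \<le> i \<and> i < length P \<and> v = P!i"
proof -
  obtain k where "k < length (drop m P)" "drop m P ! k = v" using assms by (auto simp: in_set_conv_nth)
  then show ?thesis by (intro exI[of _ "m+k"]) auto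
qed


locale tree_ctx =
  fixes V :: "'a set" and E :: "'a \<Rightarrow> 'a \<Rightarrow> bool"
  assumes tree: "is_tree V E"
begin

abbreviation gd where "gd u v \<equiv> gdist V E u v"

lemma fin: "finite V" using tree by (simp add: is_tree_def simple_graph_def)
lemma sym: "E u v \<Longrightarrow> E v u" using tree by (simp add: is_tree_def simple_graph_def)
lemma irr: "\<not> E v v" using tree by (simp add: is_tree_def simple_graph_def)
lemma inV: "E u v \<Longrightarrow> u \<in> V \<and> v \<in> V" using tree by (simp add: is_tree_def simple_graph_def)
lemma conn: "u \<in> V \<Longrightarrow> v \<in> V \<Longrightarrow> \<exists>ps. walk V E ps \<and> hd ps = u \<and> last ps = v"
  using tree by (simp add: is_tree_def connected_graph_def)
lemma nocyc: "\<not> has_cycle V E" using tree by (simp add: is_tree_def)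
lemma nonempty: "V \<noteq> {}" using tree by (simp add: is_tree_def)

lemma shortest_ex:
  assumes "u \<in> V" "v \<in> V"
  shows "\<exists>ps. walk V E ps \<and> hd ps = u \<and> last ps = v \<and> length ps = Suc (gd u v)"
proof -
  obtain ps where ps: "walk V E ps" "hd ps = u" "last ps = v" using conn assms by blast
  then have "length ps = Suc (length ps - 1)" by (cases ps) (auto simp: walk_def)
  with ps have "\<exists>k ps. walk V E ps \<and> hd ps = u \<and> last ps = v \<and> length ps = Suc k" by blast
  from LeastI_ex[OF this] show ?thesis unfolding gdist_def .
qed

lemma shortest_le:
  assumes "walk V E ps" "hd ps = u" "last ps = v"
  shows "gd u v < length ps"
proof -
  have "length ps = Suc (length ps - 1)" using assms by (cases ps) (auto simp: walk_def)
  with assms have "gd u v \<le> length ps - 1" unfolding gdist_def by (metis (mono_tags, lifting) Least_le)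
  then show ?thesis using assms by (cases ps) (auto simp: walk_def)
qed

lemma gd_refl: "u \<in> V \<Longrightarrow> gd u u = 0"
  using shortest_le[of "[u]" u u] by (simp add: walk_def)

lemma gd_zero: assumes "u \<in> V" "v \<in> V" "gd u v = 0" shows "u = v"
proof -
  obtain ps where "walk V E ps" "hd ps = u" "last ps = v" "length ps = Suc 0"
    using shortest_ex[OF assms(1,2)] assms(3) by auto
  then show ?thesis by (cases ps) auto
qed

lemma gd_sym_le: assumes "u \<in> V" "v \<in> V" shows "gd v u \<le> gd u v"
proof -
  obtain ps where ps: "walk V E ps" "hd ps = u" "last ps = v" "length ps = Suc (gd u v)"
    using shortest_ex[OF assms(1,2)] by auto
  have "walk V E (rev ps)" using walk_rev[OF ps(1)] sym by blast
  moreover have "hd (rev ps) = v" "last (rev ps) = u" using ps by (auto simp: walk_def hd_rev last_rev)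
  ultimately have "gd v u < length (rev ps)" using shortest_le by blast
  then show ?thesis using ps by simp
qed

lemma gd_sym: "u \<in> V \<Longrightarrow> v \<in> V \<Longrightarrow> gd u v = gd v u"
  using gd_sym_le by (meson antisym)

lemma gd_edge: assumes "a \<in> V" "E u v" shows "gd a v \<le> gd a u + 1"
proof -
  obtain ps where ps: "walk V E ps" "hd ps = a" "last ps = u" "length ps = Suc (gd a u)"
    using shortest_ex[OF assms(1)] inV[OF assms(2)] by auto
  have w: "walk V E [v]" using inV[OF assms(2)] by (simp add: walk_def)
  have "walk V E (ps @ [v])" using walk_append[OF ps(1) w] ps assms by simp
  moreover have "hd (ps @ [v]) = a" using ps by (cases ps) (auto simp: walk_def)
  ultimately have "gd a v < length (ps @ [v])" using shortest_le by fastforce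
  then show ?thesis using ps by simp
qed

lemma gd_pos:
  assumes a: "a \<in> V" and P: "walk V E P" "hd P = a" "length P = Suc (gd a (last P))"
    and i: "i < length P"
  shows "gd a (P!i) = i"
proof -
  have ne: "P \<noteq> []" using P by (auto simp: walk_def)
  have "walk V E (take (Suc i) P)" using walk_take[OF P(1)] by simp
  moreover have "hd (take (Suc i) P) = a" using P ne by (cases P) auto
  moreover have "last (take (Suc i) P) = P!i" using i by (simp add: take_Suc_conv_app_nth)
  ultimately have le: "gd a (P!i) < Suc i" using shortest_le i by fastforce
  have "\<not> gd a (P!i) < i"
  proof
    assume lt: "gd a (P!i) < i"
    have Pi: "P!i \<in> V" using P(1) i by (auto simp: walk_def)
    obtain W where W: "walk V E W" "hd W = a" "last W = P!i" "length W = Suc (gd a (P!i))"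
      using shortest_ex[OF a Pi] by auto
    have dw: "walk V E (drop i P)" using walk_drop[OF P(1) i] .
    have hdd: "hd (drop i P) = P!i" using i by (simp add: hd_drop_conv_nth)
    have j: "walk V E (W @ tl (drop i P))" using walk_join[OF W(1) dw] W hdd by simp
    have "W \<noteq> []" using W by (auto simp: walk_def)
    then have "hd (W @ tl (drop i P)) = a" using W by simp
    moreover have "last (W @ tl (drop i P)) = last P"
      using join_last[of W "drop i P"] \<open>W \<noteq> []\<close> i W hdd by simp
    ultimately have "gd a (last P) < length (W @ tl (drop i P))" using shortest_le j by blast
    then show False using lt W P i by simp
  qed
  then show ?thesis using le by simp
qed

lemma shortest_distinct:
  assumes a: "a \<in> V" and P: "walk V E P" "hd P = a" "length P = Suc (gd a (last P))"
  shows "distinct P"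
  unfolding distinct_conv_nth using gd_pos[OF assms] by metis

end

context tree_ctx begin

lemma cycle_contra:
  assumes a: "a \<in> V"
  and P: "walk V E P" "hd P = a" "length P = Suc L" "gd a (last P) = L"
  and Q: "walk V E Q" "hd Q = a" "length Q = Suc L" "gd a (last Q) = L"
  and xy: "last P \<noteq> last Q"
  and M: "(M = [] \<and> E (last P) (last Q)) \<or> (M \<noteq> [] \<and> walk V E M \<and> E (last P) (hd M) \<and> E (last M) (last Q))"
  and Md: "distinct M" and Mf: "\<forall>v\<in>set M. gd a v > L"
  shows False
proof -
  have posP: "\<And>i. i < Suc L \<Longrightarrow> gd a (P!i) = i" using gd_pos[OF a P(1,2)] P by simp
  have posQ: "\<And>i. i < Suc L \<Longrightarrow> gd a (Q!i) = i" using gd_pos[OF a Q(1,2)] Q by simp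
  have neP: "P \<noteq> []" and neQ: "Q \<noteq> []" using P Q by auto
  define S where "S = {i. i \<le> L \<and> P!i = Q!i}"
  have finS: "finite S" unfolding S_def by simp
  have "0 \<in> S" unfolding S_def using P Q neP neQ by (simp add: hd_conv_nth)
  define m where "m = Max S"
  have mS: "m \<in> S" using finS \<open>0 \<in> S\<close> m_def Max_in by blast
  have mmax: "\<And>i. i \<in> S \<Longrightarrow> i \<le> m" using finS m_def by simp
  have lastP: "last P = P!L" using P neP by (simp add: last_conv_nth)
  have lastQ: "last Q = Q!L" using Q neQ by (simp add: last_conv_nth)
  have mLe: "m \<le> L" and PQm: "P!m = Q!m" using mS unfolding S_def by auto
  have mL: "m < L"
  proof (rule ccontr)
    assume "\<not> m < L"
    then have "m = L" using mLe by simp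
    then show False using PQm xy lastP lastQ by simp
  qed
  define A where "A = drop m P"
  define B where "B = rev (drop (Suc m) Q)"
  define C where "C = A @ M @ B"
  have wA: "walk V E A" unfolding A_def using walk_drop[OF P(1)] mL P by simp
  have wB: "walk V E B" unfolding B_def using walk_rev[OF walk_drop[OF Q(1)] sym] mL Q by simp
  have lastA: "last A = last P" unfolding A_def using mL P by simp
  have hdB: "hd B = last Q" unfolding B_def using mL Q by (simp add: hd_rev)
  have hdA: "hd A = P!m" unfolding A_def using mL P by (simp add: hd_drop_conv_nth)
  have lastB: "last B = Q!Suc m" unfolding B_def using mL Q by (simp add: last_rev hd_drop_conv_nth)
  have neB: "B \<noteq> []" unfolding B_def using mL Q by simp
  have neA: "A \<noteq> []" unfolding A_def using mL P by simp
  have wC: "walk V E C"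
    using M
  proof
    assume "M = [] \<and> E (last P) (last Q)"
    then show ?thesis unfolding C_def using walk_append[OF wA wB] lastA hdB by simp
  next
    assume h: "M \<noteq> [] \<and> walk V E M \<and> E (last P) (hd M) \<and> E (last M) (last Q)"
    then have "walk V E (M @ B)" using walk_append[of V E M B] wB hdB by simp
    then show ?thesis unfolding C_def using walk_append[OF wA, of "M @ B"] lastA h by simp
  qed
  have dP: "distinct P" using shortest_distinct[OF a P(1,2)] P by simp
  have dQ: "distinct Q" using shortest_distinct[OF a Q(1,2)] Q by simp
  have setA: "\<And>v. v \<in> set A \<Longrightarrow> \<exists>i. m \<le> i \<and> i \<le> L \<and> v = P!i"
    unfolding A_def using in_set_drop_nth P by fastforce
  have setB: "\<And>v. v \<in> set B \<Longrightarrow> \<exists>i. Suc m \<le> i \<and> i \<le> L \<and> v = Q!i"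
    unfolding B_def using in_set_drop_nth Q by fastforce
  have AM: "set A \<inter> set M = {}"
  proof (rule ccontr)
    assume "set A \<inter> set M \<noteq> {}"
    then obtain v where "v \<in> set A" "v \<in> set M" by blast
    then show False using setA posP Mf by fastforce
  qed
  have BM: "set M \<inter> set B = {}"
  proof (rule ccontr)
    assume "set M \<inter> set B \<noteq> {}"
    then obtain v where "v \<in> set B" "v \<in> set M" by blast
    then show False using setB posQ Mf by fastforce
  qed
  have AB: "set A \<inter> set B = {}"
  proof (rule ccontr)
    assume "set A \<inter> set B \<noteq> {}"
    then obtain v where "v \<in> set A" "v \<in> set B" by blast
    then obtain i j where ij: "m \<le> i" "i \<le> L" "v = P!i" "Suc m \<le> j" "j \<le> L" "v = Q!j"
      using setA setB by metis
    have "i = j" using posP[of i] posQ[of j] ij by simp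
    then have "j \<in> S" using ij S_def by simp
    then show False using mmax ij by fastforce
  qed
  have dC: "distinct C" unfolding C_def using AM BM AB Md dP dQ
    by (auto simp: A_def B_def)
  have lC: "length C \<ge> 3" unfolding C_def A_def B_def using P Q mL by simp
  have eC: "E (last C) (hd C)"
  proof -
    have "last C = Q!Suc m" unfolding C_def using lastB neB by simp
    moreover have "hd C = Q!m" unfolding C_def using hdA neA PQm by simp
    moreover have "E (Q!m) (Q!Suc m)" using Q mL by (simp add: walk_def)
    ultimately show ?thesis using sym by metis
  qed
  have "has_cycle V E" unfolding has_cycle_def using wC dC lC eC by blast
  then show False using nocyc by simp
qed

end

context tree_ctx begin

lemma edge_neq: assumes a: "a \<in> V" and e: "E b c" shows "gd a c \<noteq> gd a b"
proof
  assume eq: "gd a c = gd a b"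
  have bV: "b \<in> V" and cV: "c \<in> V" using inV[OF e] by auto
  obtain P where P: "walk V E P" "hd P = a" "last P = b" "length P = Suc (gd a b)"
    using shortest_ex[OF a bV] by auto
  obtain Q where Q: "walk V E Q" "hd Q = a" "last Q = c" "length Q = Suc (gd a b)"
    using shortest_ex[OF a cV] eq by auto
  have h1: "gd a (last P) = gd a b" using P by simp
  have h2: "gd a (last Q) = gd a b" using Q eq by simp
  have h3: "last P \<noteq> last Q" using P Q e irr by metis
  have h4: "([] = [] \<and> E (last P) (last Q)) \<or> ([] \<noteq> [] \<and> walk V E [] \<and> E (last P) (hd []) \<and> E (last []) (last Q))"
    using P Q e by simp
  show False
    using cycle_contra[OF a P(1,2,4) h1 Q(1,2,4) h2 h3 h4] by simp
qed

lemma edge_cases: assumes a: "a \<in> V" and e: "E b c"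
  shows "gd a c + 1 = gd a b \<or> gd a c = gd a b + 1"
  using edge_neq[OF a e] gd_edge[OF a e] gd_edge[OF a sym[OF e]] by linarith

lemma up_unique:
  assumes a: "a \<in> V" and e1: "E b c1" and e2: "E b c2"
    and d1: "gd a c1 + 1 = gd a b" and d2: "gd a c2 + 1 = gd a b"
  shows "c1 = c2"
proof (rule ccontr)
  assume ne: "c1 \<noteq> c2"
  have bV: "b \<in> V" and c1V: "c1 \<in> V" and c2V: "c2 \<in> V" using inV e1 e2 by auto
  obtain P where P: "walk V E P" "hd P = a" "last P = c1" "length P = Suc (gd a c1)"
    using shortest_ex[OF a c1V] by auto
  obtain Q where Q: "walk V E Q" "hd Q = a" "last Q = c2" "length Q = Suc (gd a c1)"
    using shortest_ex[OF a c2V] d1 d2 by auto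
  have wb: "walk V E [b]" using bV by (simp add: walk_def)
  have h1: "gd a (last P) = gd a c1" using P by simp
  have h2: "gd a (last Q) = gd a c1" using Q d1 d2 by simp
  have h3: "last P \<noteq> last Q" using P Q ne by simp
  have h4: "([b] = [] \<and> E (last P) (last Q)) \<or> ([b] \<noteq> [] \<and> walk V E [b] \<and> E (last P) (hd [b]) \<and> E (last [b]) (last Q))"
    using P Q sym[OF e1] e2 wb by simp
  have h5: "distinct [b]" by simp
  have h6: "\<forall>v\<in>set [b]. gd a v > gd a c1" using d1 by simp
  show False
    using cycle_contra[OF a P(1,2,4) h1 Q(1,2,4) h2 h3 h4 h5 h6] .
qed

lemma up_exists:
  assumes a: "a \<in> V" and bV: "b \<in> V" and ne: "b \<noteq> a"
  shows "\<exists>c. E b c \<and> gd a c + 1 = gd a b"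
proof -
  obtain P where P: "walk V E P" "hd P = a" "last P = b" "length P = Suc (gd a b)"
    using shortest_ex[OF a bV] by auto
  define L where "L = gd a b"
  have L0: "L \<noteq> 0" using gd_zero[OF a bV] ne L_def by auto
  have lastP: "P!L = b" using P L_def by (metis diff_Suc_1 last_conv_nth list.size(3) nat.simps(3))
  have "Suc (L-1) < length P" using P L_def L0 by simp
  with P(1) have "E (P!(L-1)) (P!Suc (L-1))" unfolding walk_def by blast
  then have e: "E (P!(L-1)) b" using L0 lastP by simp
  have "gd a (P!(L-1)) = L - 1" using gd_pos[OF a P(1,2)] P L_def by simp
  then show ?thesis using sym[OF e] L0 L_def by (intro exI[of _ "P!(L-1)"]) auto
qed

definition N where "N b = {c\<in>V. E b c}"
definition Up where "Up a b = {c\<in>V. E b c \<and> gd a c + 1 = gd a b}"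

lemma card_Up: assumes a: "a \<in> V" and bV: "b \<in> V"
  shows "card (Up a b) = (if b = a then 0 else 1)"
proof (cases "b = a")
  case True
  then have "Up a b = {}" unfolding Up_def using gd_refl[OF a] by auto
  then show ?thesis using True by simp
next
  case False
  obtain c where c: "E b c" "gd a c + 1 = gd a b" using up_exists[OF a bV False] by auto
  have "Up a b = {c}" unfolding Up_def using c up_unique[OF a] inV[OF c(1)] by blast
  then show ?thesis using False by simp
qed

lemma deg_N: "degree V E b = card (N b)" unfolding degree_def N_def by simp

lemma split_sum:
  assumes a: "a \<in> V" and bV: "b \<in> V"
    and gu: "\<And>c. c \<in> N b \<Longrightarrow> gd a c + 1 = gd a b \<Longrightarrow> g c = (\<alpha>::int)"
    and gdn: "\<And>c. c \<in> N b \<Longrightarrow> gd a c = gd a b + 1 \<Longrightarrow> g c = \<beta>"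
  shows "(\<Sum>c\<in>N b. g c) = int (card (Up a b)) * \<alpha> + (int (degree V E b) - int (card (Up a b))) * \<beta>"
proof -
  define Dn where "Dn = {c\<in>V. E b c \<and> gd a c = gd a b + 1}"
  have un: "N b = Up a b \<union> Dn" unfolding N_def Up_def Dn_def using edge_cases[OF a] by blast
  have dj: "Up a b \<inter> Dn = {}" unfolding Up_def Dn_def by auto
  have f1: "finite (Up a b)" "finite Dn" unfolding Up_def Dn_def using fin by auto
  have s1: "(\<Sum>c\<in>Up a b. g c) = int (card (Up a b)) * \<alpha>"
    using gu un by (simp add: Up_def)
  have s2: "(\<Sum>c\<in>Dn. g c) = int (card Dn) * \<beta>"
    using gdn un by (simp add: Dn_def)
  have cN: "card (N b) = card (Up a b) + card Dn" using un dj f1 card_Un_disjoint by metis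
  have "(\<Sum>c\<in>N b. g c) = (\<Sum>c\<in>Up a b. g c) + (\<Sum>c\<in>Dn. g c)" using un dj f1 sum.union_disjoint by metis
  then show ?thesis using s1 s2 cN deg_N by (simp add: algebra_simps)
qed

lemma antisym_sum:
  "(\<Sum>b\<in>V. \<Sum>c\<in>N b. (f b c - f c b)) = (0::int)"
proof -
  have eq1: "\<And>h. (\<Sum>b\<in>V. \<Sum>c\<in>N b. h b c) = (\<Sum>b\<in>V. \<Sum>c\<in>V. if E b c then h b c else (0::int))"
    unfolding N_def by (simp add: sum.inter_filter[OF fin])
  have "(\<Sum>b\<in>V. \<Sum>c\<in>V. if E b c then f c b else (0::int)) = (\<Sum>c\<in>V. \<Sum>b\<in>V. if E b c then f c b else 0)"
    by (rule sum.swap)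
  also have "\<dots> = (\<Sum>c\<in>V. \<Sum>b\<in>V. if E c b then f c b else 0)"
    by (intro sum.cong refl) (metis sym)
  finally have "(\<Sum>b\<in>V. \<Sum>c\<in>N b. f c b) = (\<Sum>b\<in>V. \<Sum>c\<in>N b. f b c)" using eq1 by simp
  then show ?thesis by (simp add: sum_subtractf)
qed

end

context tree_ctx begin

lemma sum_notA: assumes a: "a \<in> V" shows "(\<Sum>b\<in>V. (if b = a then 0 else 1::int)) = int (card V) - 1"
proof -
  have "(\<Sum>b\<in>V. (if b = a then 0 else 1::int)) = (\<Sum>b\<in>V. 1 - (if b = a then 1 else 0))"
    by (intro sum.cong refl) simp
  also have "\<dots> = int (card V) - 1" using fin a by (simp add: sum_subtractf)
  finally show ?thesis .
qed

lemma handshake: "(\<Sum>b\<in>V. int (degree V E b)) = 2 * (int (card V) - 1)"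
proof -
  obtain a where a: "a \<in> V" using nonempty by auto
  have inner: "(\<Sum>c\<in>N b. (int (gd a b) - int (gd a c))) =
      2 * (if b = a then 0 else 1) - int (degree V E b)" if bV: "b \<in> V" for b
  proof -
    have "(\<Sum>c\<in>N b. (int (gd a b) - int (gd a c))) =
        int (card (Up a b)) * 1 + (int (degree V E b) - int (card (Up a b))) * (-1)"
      by (rule split_sum[OF a bV]) auto
    then show ?thesis using card_Up[OF a bV] by auto
  qed
  have "0 = (\<Sum>b\<in>V. \<Sum>c\<in>N b. (int (gd a b) - int (gd a c)))"
    using antisym_sum[of "\<lambda>b c. int (gd a b)"] by simp
  also have "\<dots> = (\<Sum>b\<in>V. 2 * (if b = a then 0 else 1) - int (degree V E b))"
    using inner by (intro sum.cong refl) auto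
  also have "\<dots> = 2 * (\<Sum>b\<in>V. (if b = a then 0 else 1)) - (\<Sum>b\<in>V. int (degree V E b))"
    by (simp add: sum_subtractf sum_distrib_left)
  finally show ?thesis using sum_notA[OF a] by simp
qed

lemma key: assumes a: "a \<in> V"
  shows "(\<Sum>b\<in>V. int (degree V E b) * int (gd a b)) = 2 * (\<Sum>b\<in>V. int (gd a b)) - (int (card V) - 1)"
proof -
  have inner: "(\<Sum>c\<in>N b. (int (gd a b)^2 - int (gd a c)^2)) =
      4 * int (gd a b) - 2 * int (degree V E b) * int (gd a b) - int (degree V E b)" if bV: "b \<in> V" for b
  proof -
    have "(\<Sum>c\<in>N b. (int (gd a b)^2 - int (gd a c)^2)) =
        int (card (Up a b)) * (2 * int (gd a b) - 1) + (int (degree V E b) - int (card (Up a b))) * (- 2 * int (gd a b) - 1)"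
    proof (rule split_sum[OF a bV])
      fix c assume "gd a c + 1 = gd a b"
      then have "int (gd a b) = int (gd a c) + 1" by simp
      then show "int (gd a b)^2 - int (gd a c)^2 = 2 * int (gd a b) - 1"
        by (simp add: power2_eq_square algebra_simps)
    next
      fix c assume "gd a c = gd a b + 1"
      then have "int (gd a c) = int (gd a b) + 1" by simp
      then show "int (gd a b)^2 - int (gd a c)^2 = - 2 * int (gd a b) - 1"
        by (simp add: power2_eq_square algebra_simps)
    qed
    moreover have "b = a \<Longrightarrow> gd a b = 0" using gd_refl[OF a] by simp
    ultimately show ?thesis using card_Up[OF a bV] by (cases "b = a") (auto simp: algebra_simps)
  qed
  have "0 = (\<Sum>b\<in>V. \<Sum>c\<in>N b. (int (gd a b)^2 - int (gd a c)^2))"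
    using antisym_sum[of "\<lambda>b c. int (gd a b)^2"] by simp
  also have "\<dots> = (\<Sum>b\<in>V. 4 * int (gd a b) - 2 * int (degree V E b) * int (gd a b) - int (degree V E b))"
    using inner by (intro sum.cong refl) auto
  also have "\<dots> = 4 * (\<Sum>b\<in>V. int (gd a b)) - 2 * (\<Sum>b\<in>V. int (degree V E b) * int (gd a b))
      - (\<Sum>b\<in>V. int (degree V E b))"
    by (simp add: sum_subtractf sum_distrib_left mult.assoc)
  finally show ?thesis using handshake by simp
qed

end

theorem corollary2p3:
  fixes V :: "'a set" and E :: "'a \<Rightarrow> 'a \<Rightarrow> bool"
  assumes "is_tree V E"
  defines "n \<equiv> card V"
  shows "(\<Sum>a\<in>V. \<Sum>b\<in>V. int (degree V E a) * int (gdist V E a b) * int (degree V E b))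
         = 4 * (\<Sum>a\<in>V. \<Sum>b\<in>V. int (gdist V E a b)) - 2 * (int n - 1) * (2 * int n - 1)"
proof -
  interpret tree_ctx V E using assms(1) by unfold_locales
  define dg where "dg b = int (degree V E b)" for b
  define Dm where "Dm a b = int (gdist V E a b)" for a b
  define S where "S a = (\<Sum>b\<in>V. Dm a b)" for a
  have K: "a \<in> V \<Longrightarrow> (\<Sum>b\<in>V. dg b * Dm a b) = 2 * S a - (int n - 1)" for a
    using key[of a] unfolding dg_def Dm_def S_def n_def by simp
  have H: "(\<Sum>b\<in>V. dg b) = 2 * (int n - 1)" using handshake unfolding dg_def n_def .
  have "(\<Sum>a\<in>V. \<Sum>b\<in>V. dg a * Dm a b * dg b) = (\<Sum>a\<in>V. dg a * (\<Sum>b\<in>V. dg b * Dm a b))"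
    by (simp add: sum_distrib_left mult_ac)
  also have "\<dots> = (\<Sum>a\<in>V. dg a * (2 * S a - (int n - 1)))"
    using K by (intro sum.cong refl) auto
  also have "\<dots> = (\<Sum>a\<in>V. 2 * (dg a * S a) - (int n - 1) * dg a)"
    by (intro sum.cong refl) (simp add: algebra_simps)
  also have "\<dots> = 2 * (\<Sum>a\<in>V. dg a * S a) - (int n - 1) * (\<Sum>a\<in>V. dg a)"
    by (simp add: sum_subtractf sum_distrib_left)
  also have "(\<Sum>a\<in>V. dg a * S a) = 2 * (\<Sum>a\<in>V. S a) - int n * (int n - 1)"
  proof -
    have "(\<Sum>a\<in>V. dg a * S a) = (\<Sum>a\<in>V. \<Sum>b\<in>V. dg a * Dm a b)"
      unfolding S_def by (simp add: sum_distrib_left)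
    also have "\<dots> = (\<Sum>b\<in>V. \<Sum>a\<in>V. dg a * Dm a b)" by (rule sum.swap)
    also have "\<dots> = (\<Sum>b\<in>V. \<Sum>a\<in>V. dg a * Dm b a)"
      unfolding Dm_def by (intro sum.cong refl) (simp add: gd_sym)
    also have "\<dots> = (\<Sum>b\<in>V. 2 * S b - (int n - 1))"
      using K by (intro sum.cong refl) auto
    also have "\<dots> = 2 * (\<Sum>a\<in>V. S a) - int n * (int n - 1)"
      by (simp add: sum_subtractf sum_distrib_left n_def)
    finally show ?thesis .
  qed
  finally have "(\<Sum>a\<in>V. \<Sum>b\<in>V. dg a * Dm a b * dg b) = 4 * (\<Sum>a\<in>V. S a) - 2 * (int n - 1) * (2 * int n - 1)"
    using H by (simp add: algebra_simps)
  then show ?thesis unfolding dg_def Dm_def S_def .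
qed


end
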